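(* Fix a finite candidate set $C$ with $|C|=m$, and work on $\mathcal E(C)$, the elections with candidate set $C$. (a) If $\mathcal K$ is a reversal-symmetric $m$-consensus on $\mathcal E(C)$ and $d$ is a reversal-symmetric map $\mathcal E(C)\times\mathcal E(C)\to[0,\infty]$, then $\mathcal R(\mathcal K,d)$ is reversal symmetric, i.e. $\mathcal R(\mathcal K,d)(\mathrm{rev}(E))=\{\mathrm{rev}(r):r\in\mathcal R(\mathcal K,d)(E)\}$ for all $E$. (b) Conversely, if $R$ is a reversal-symmetric social welfare rule on $\mathcal E(C)$ that is distance rationalizable, then $R$ is distance rationalizable with respect to some $(\mathcal K,d)$ with $\mathcal K$ and $d$ both reversal symmetric.
   Context: $L(C)$ is the set of strict linear orders of $C$. An election with candidate set $C$ is $E=(C,V,\pi)$ with $V$ a finite nonempty subset of a fixed countably infinite voter set $V^*$ and $\pi:V\to L(C)$; $\mathcal E(C)$ is the set of these. For $\rho\in L(C)$, $\mathrm{rev}(\rho)$ is the reversed order, and $\mathrm{rev}(C,V,\pi)=(C,V,\mathrm{rev}\circ\pi)$. A social welfare rule on $\mathcal E(C)$ assigns to each $E$ a nonempty subset $R(E)\subseteq L(C)$; it is reversal symmetric if $R(\mathrm{rev}(E))=\mathrm{rev}(R(E))$. An $m$-consensus is a map $\mathcal K$ from $D(\mathcal K)\subseteq\mathcal E(C)$ to $L(C)$, $\mathcal K_r=\mathcal K^{-1}(r)$; it is reversal symmetric if $D(\mathcal K)$ is closed under $\mathrm{rev}$ and $\mathcal K(\mathrm{rev}(E))=\mathrm{rev}(\mathcal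 K(E))$. A map $d$ is reversal symmetric if $d(\mathrm{rev}(E),\mathrm{rev}(E'))=d(E,E')$. A distance is $d:\mathcal E(C)\times\mathcal E(C)\to[0,\infty]$ with $d(E,E)=0$ and the triangle inequality. $d(E,A)=\inf_{F\in A}d(E,F)$ ($\infty$ if $A=\emptyset$), and $\mathcal R(\mathcal K,d)(E)$ is the set of $r\in L(C)$ with $d(E,\mathcal K_r)=\min_{r'\in L(C)}d(E,\mathcal K_{r'})$. $R$ is distance rationalizable with respect to $(\mathcal K,d)$ if $d$ is a distance, $d(x,y)>0$ whenever $x\in\mathcal K_r,y\in\mathcal K_{r'},r\ne r'$, and $R=\mathcal R(\mathcal K,d)$; $R$ is distance rationalizable if some such pair exists. *)

theory Defs
  imports "HOL-Library.Extended_Nonnegative_Real"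
begin

text \<open>Voters: the fixed countably infinite voter set V* is taken to be the type nat.
  Orders are strict relations on the candidate type; an election is a triple
  (C, V, pi) where pi assigns the empty relation outside V (canonical representation).\<close>

type_synonym 'c election = "'c set \<times> nat set \<times> (nat \<Rightarrow> 'c rel)"

definition lin_orders :: "'c set \<Rightarrow> 'c rel set" where
  "lin_orders C = {r. r \<subseteq> C \<times> C \<and> strict_linear_order_on C r}"

definition elections :: "'c set \<Rightarrow> 'c election set" where
  "elections C = {(C', V, \<pi>). C' = C \<and> finite V \<and> V \<noteq> {} \<and>
      (\<forall>v\<in>V. \<pi> v \<in> lin_orders C) \<and> (\<forall>v. v \<notin> V \<longrightarrow> \<pi> v = {})}"

definition rev_order :: "'c rel \<Rightarrow> 'c rel" where
  "rev_order r = r\<inverse>"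

definition rev_elec :: "'c election \<Rightarrow> 'c election" where
  "rev_elec E = (case E of (C, V, \<pi>) \<Rightarrow> (C, V, rev_order \<circ> \<pi>))"

definition swr :: "'c set \<Rightarrow> ('c election \<Rightarrow> 'c rel set) \<Rightarrow> bool" where
  "swr C R \<longleftrightarrow> (\<forall>E\<in>elections C. R E \<noteq> {} \<and> R E \<subseteq> lin_orders C)"

definition swr_rev_sym :: "'c set \<Rightarrow> ('c election \<Rightarrow> 'c rel set) \<Rightarrow> bool" where
  "swr_rev_sym C R \<longleftrightarrow> (\<forall>E\<in>elections C. R (rev_elec E) = rev_order ` R E)"

definition consensus :: "'c set \<Rightarrow> ('c election \<Rightarrow> 'c rel option) \<Rightarrow> bool" where
  "consensus C K \<longleftrightarrow> dom K \<subseteq> elections C \<and> ran K \<subseteq> lin_orders C"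

definition cons_class :: "('c election \<Rightarrow> 'c rel option) \<Rightarrow> 'c rel \<Rightarrow> 'c election set" where
  "cons_class K r = {E. K E = Some r}"

definition cons_rev_sym :: "('c election \<Rightarrow> 'c rel option) \<Rightarrow> bool" where
  "cons_rev_sym K \<longleftrightarrow> (\<forall>E\<in>dom K. rev_elec E \<in> dom K \<and>
      K (rev_elec E) = Some (rev_order (the (K E))))"

definition map_rev_sym :: "'c set \<Rightarrow> ('c election \<Rightarrow> 'c election \<Rightarrow> ennreal) \<Rightarrow> bool" where
  "map_rev_sym C d \<longleftrightarrow> (\<forall>E\<in>elections C. \<forall>E'\<in>elections C.
      d (rev_elec E) (rev_elec E') = d E E')"

definition is_distance :: "'c set \<Rightarrow> ('c election \<Rightarrow> 'c election \<Rightarrow> ennreal) \<Rightarrow> bool" where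
  "is_distance C d \<longleftrightarrow> (\<forall>E\<in>elections C. d E E = 0) \<and>
     (\<forall>x\<in>elections C. \<forall>y\<in>elections C. \<forall>z\<in>elections C. d x z \<le> d x y + d y z)"

text \<open>d(E,A) = inf over A; Inf {} = \<infinity> in ennreal.\<close>
definition set_dist :: "('c election \<Rightarrow> 'c election \<Rightarrow> ennreal) \<Rightarrow> 'c election \<Rightarrow> 'c election set \<Rightarrow> ennreal" where
  "set_dist d E A = (INF F\<in>A. d E F)"

definition rat_rule :: "'c set \<Rightarrow> ('c election \<Rightarrow> 'c rel option) \<Rightarrow>
     ('c election \<Rightarrow> 'c election \<Rightarrow> ennreal) \<Rightarrow> 'c election \<Rightarrow> 'c rel set" where
  "rat_rule C K d E = {r \<in> lin_orders C.
      set_dist d E (cons_class K r) = Min ((\<lambda>r'. set_dist d E (cons_class K r')) ` lin_orders C)}"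

definition dist_rat_wrt :: "'c set \<Rightarrow> ('c election \<Rightarrow> 'c rel set) \<Rightarrow>
     ('c election \<Rightarrow> 'c rel option) \<Rightarrow> ('c election \<Rightarrow> 'c election \<Rightarrow> ennreal) \<Rightarrow> bool" where
  "dist_rat_wrt C R K d \<longleftrightarrow> consensus C K \<and> is_distance C d \<and>
     (\<forall>r r' x y. x \<in> cons_class K r \<longrightarrow> y \<in> cons_class K r' \<longrightarrow> r \<noteq> r' \<longrightarrow> d x y > 0) \<and>
     (\<forall>E\<in>elections C. R E = rat_rule C K d E)"

definition dist_rat :: "'c set \<Rightarrow> ('c election \<Rightarrow> 'c rel set) \<Rightarrow> bool" where
  "dist_rat C R \<longleftrightarrow> (\<exists>K d. dist_rat_wrt C R K d)"

end

theory Submission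
  imports Defs "HOL-Library.Countable_Set"
begin


lemma rev_order_inv[simp]: "rev_order (rev_order r) = r"
  by (simp add: rev_order_def)

lemma rev_order_inj: "inj rev_order"
  by (metis injI rev_order_inv)

lemma rev_elec_inv[simp]: "rev_elec (rev_elec E) = E"
  by (cases E) (auto simp: rev_elec_def comp_def)

lemma rev_elec_inj: "inj rev_elec"
  by (metis injI rev_elec_inv)

lemma rev_order_lin: "r \<in> lin_orders C \<Longrightarrow> rev_order r \<in> lin_orders C"
  unfolding lin_orders_def rev_order_def strict_linear_order_on_def
  by (auto simp: irrefl_def total_on_def trans_def)

lemma rev_order_image_lin[simp]: "rev_order ` lin_orders C = lin_orders C"
proof
  show "rev_order ` lin_orders C \<subseteq> lin_orders C" using rev_order_lin by blast
  show "lin_orders C \<subseteq> rev_order ` lin_orders C"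
    by (metis image_eqI rev_order_inv rev_order_lin subsetI)
qed

lemma rev_elec_elections: "E \<in> elections C \<Longrightarrow> rev_elec E \<in> elections C"
  by (cases E) (auto simp: elections_def rev_elec_def rev_order_lin, simp add: rev_order_def)

lemma rev_elec_elections_iff[simp]: "rev_elec E \<in> elections C \<longleftrightarrow> E \<in> elections C"
  by (metis rev_elec_elections rev_elec_inv)

lemma finite_lin: "finite C \<Longrightarrow> finite (lin_orders C)"
proof -
  assume "finite C"
  have "lin_orders C \<subseteq> Pow (C \<times> C)" by (auto simp: lin_orders_def)
  thus ?thesis using \<open>finite C\<close> by (meson finite_Pow_iff finite_SigmaI finite_subset)
qed




lemma class_rev:
  assumes "cons_rev_sym K"
  shows "cons_class K (rev_order r) = rev_elec ` cons_class K r"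
proof
  show "rev_elec ` cons_class K r \<subseteq> cons_class K (rev_order r)"
  proof
    fix x assume "x \<in> rev_elec ` cons_class K r"
    then obtain F where F: "K F = Some r" "x = rev_elec F" by (auto simp: cons_class_def)
    hence "F \<in> dom K" by auto
    hence "K x = Some (rev_order r)" using assms F unfolding cons_rev_sym_def by auto
    thus "x \<in> cons_class K (rev_order r)" by (simp add: cons_class_def)
  qed
  show "cons_class K (rev_order r) \<subseteq> rev_elec ` cons_class K r"
  proof
    fix G assume "G \<in> cons_class K (rev_order r)"
    hence G: "K G = Some (rev_order r)" by (simp add: cons_class_def)
    have "G \<in> dom K" using G by auto
    hence "K (rev_elec G) = Some r" using assms G unfolding cons_rev_sym_def by auto
    hence "rev_elec G \<in> cons_class K r" by (simp add: cons_class_def)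
    thus "G \<in> rev_elec ` cons_class K r" by (metis image_eqI rev_elec_inv)
  qed
qed

lemma class_sub: "consensus C K \<Longrightarrow> cons_class K r \<subseteq> elections C"
  unfolding consensus_def cons_class_def by auto

lemma sd_rev:
  assumes cons: "consensus C K" and sym: "cons_rev_sym K" and ms: "map_rev_sym C d"
    and E: "E \<in> elections C"
  shows "set_dist d (rev_elec E) (cons_class K (rev_order r)) = set_dist d E (cons_class K r)"
proof -
  have "set_dist d (rev_elec E) (cons_class K (rev_order r))
      = (INF F\<in>cons_class K r. d (rev_elec E) (rev_elec F))"
    unfolding set_dist_def class_rev[OF sym] by (simp add: image_image)
  also have "\<dots> = (INF F\<in>cons_class K r. d E F)"
    using class_sub[OF cons] E ms unfolding map_rev_sym_def by (intro INF_cong) auto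
  finally show ?thesis by (simp add: set_dist_def)
qed

lemma part_a:
  assumes cons: "consensus C K" and sym: "cons_rev_sym K" and ms: "map_rev_sym C d"
    and E: "E \<in> elections C"
  shows "rat_rule C K d (rev_elec E) = rev_order ` rat_rule C K d E"
proof -
  let ?L = "lin_orders C"
  let ?f = "\<lambda>r. set_dist d (rev_elec E) (cons_class K r)"
  let ?g = "\<lambda>r. set_dist d E (cons_class K r)"
  have fg: "?f (rev_order r) = ?g r" for r using sd_rev[OF cons sym ms E] .
  have img: "?f ` ?L = ?g ` ?L"
  proof -
    have "?g ` ?L = (\<lambda>r. ?f (rev_order r)) ` ?L" using fg by simp
    also have "\<dots> = ?f ` (rev_order ` ?L)" by (rule image_image[symmetric])
    finally show ?thesis by simp
  qed
  show ?thesis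
  proof
    show "rat_rule C K d (rev_elec E) \<subseteq> rev_order ` rat_rule C K d E"
    proof
      fix x assume "x \<in> rat_rule C K d (rev_elec E)"
      hence x: "x \<in> ?L" "?f x = Min (?f ` ?L)" by (auto simp: rat_rule_def)
      let ?y = "rev_order x"
      have "?y \<in> ?L" using x rev_order_lin by blast
      moreover have "?g ?y = Min (?g ` ?L)" using x img fg[of ?y] by simp
      ultimately have "?y \<in> rat_rule C K d E" by (simp add: rat_rule_def)
      thus "x \<in> rev_order ` rat_rule C K d E" by (metis image_eqI rev_order_inv)
    qed
    show "rev_order ` rat_rule C K d E \<subseteq> rat_rule C K d (rev_elec E)"
    proof
      fix x assume "x \<in> rev_order ` rat_rule C K d E"
      then obtain y where y: "y \<in> rat_rule C K d E" "x = rev_order y" by auto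
      hence "y \<in> ?L" "?g y = Min (?g ` ?L)" by (auto simp: rat_rule_def)
      thus "x \<in> rat_rule C K d (rev_elec E)"
        using y img fg[of y] rev_order_lin by (auto simp: rat_rule_def)
    qed
  qed
qed




lemma add_INF_ge:
  fixes x a :: ennreal
  assumes "\<And>G. G \<in> A \<Longrightarrow> x \<le> a + f G"
  shows "x \<le> a + (INF G\<in>A. f G)"
proof (rule ennreal_le_epsilon)
  fix e :: real assume lt: "a + (INF G\<in>A. f G) < top" and e: "0 < e"
  have it: "(INF G\<in>A. f G) < top" using lt by (simp add: top.not_eq_extremum)
  have "(INF G\<in>A. f G) < (INF G\<in>A. f G) + ennreal e"
    using it e by (cases "(INF G\<in>A. f G)" rule: ennreal_cases) (auto simp flip: ennreal_plus simp: ennreal_less_iff)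
  then obtain G where G: "G \<in> A" "f G < (INF G\<in>A. f G) + ennreal e"
    by (auto simp: INF_less_iff)
  have "x \<le> a + f G" using assms G(1) .
  also have "\<dots> \<le> a + ((INF G\<in>A. f G) + ennreal e)" using G(2) by (intro add_left_mono) simp
  finally show "x \<le> a + (INF G\<in>A. f G) + ennreal e" by (simp add: add.assoc)
qed

lemma finite_INF_pos:
  fixes f :: "'a \<Rightarrow> ennreal"
  assumes "finite A" "\<And>x. x \<in> A \<Longrightarrow> 0 < f x"
  shows "0 < (INF x\<in>A. f x)"
proof (cases "A = {}")
  case True thus ?thesis by simp
next
  case False
  have "(INF x\<in>A. f x) \<in> f ` A"
    using assms(1) False by (metis Min_Inf Min_in finite_imageI image_is_empty)
  thus ?thesis using assms(2) by auto
qed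




context
  fixes C :: "'c set" and R and K and d
  assumes finC: "finite C" and swrR: "swr C R" and dr: "dist_rat_wrt C R K d"
begin

abbreviation "sd E r \<equiv> set_dist d E (cons_class K r)"

lemma consK: "consensus C K" using dr by (simp add: dist_rat_wrt_def)
lemma isd: "is_distance C d" using dr by (simp add: dist_rat_wrt_def)
lemma posd: "x \<in> cons_class K r \<Longrightarrow> y \<in> cons_class K r' \<Longrightarrow> r \<noteq> r' \<Longrightarrow> 0 < d x y"
  using dr unfolding dist_rat_wrt_def by blast
lemma Req: "E \<in> elections C \<Longrightarrow> R E = rat_rule C K d E"
  using dr by (simp add: dist_rat_wrt_def)

lemma domK: "K F = Some u \<Longrightarrow> F \<in> elections C"
  using consK unfolding consensus_def by auto
lemma ranK: "K F = Some u \<Longrightarrow> u \<in> lin_orders C"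
  using consK ranI unfolding consensus_def by fast

lemma sd_tri:
  assumes "E \<in> elections C" "F \<in> elections C"
  shows "sd E r \<le> d E F + sd F r"
  unfolding set_dist_def
proof (rule add_INF_ge)
  fix G assume "G \<in> cons_class K r"
  hence "G \<in> elections C" using class_sub[OF consK] by auto
  hence "d E G \<le> d E F + d F G" using isd assms unfolding is_distance_def by blast
  moreover have "(INF G\<in>cons_class K r. d E G) \<le> d E G" using \<open>G \<in> cons_class K r\<close> by (rule INF_lower)
  ultimately show "(INF G\<in>cons_class K r. d E G) \<le> d E F + d F G" by simp
qed

lemma sd_self: "K F = Some u \<Longrightarrow> sd F u = 0"
proof -
  assume F: "K F = Some u"
  have "sd F u \<le> d F F" unfolding set_dist_def using F by (intro INF_lower) (simp add: cons_class_def)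
  also have "d F F = 0" using isd domK[OF F] by (simp add: is_distance_def)
  finally show ?thesis by simp
qed

lemma Min_zero: "K F = Some u \<Longrightarrow> Min ((\<lambda>r. sd F r) ` lin_orders C) = 0"
proof -
  assume F: "K F = Some u"
  have "Min ((\<lambda>r. sd F r) ` lin_orders C) \<le> sd F u"
    using ranK[OF F] finite_lin[OF finC] by (intro Min_le) auto
  thus ?thesis using sd_self[OF F] by simp
qed

lemma R_colored: "K F = Some u \<Longrightarrow> R F = {r \<in> lin_orders C. sd F r = 0}"
  using Req[OF domK] Min_zero by (simp add: rat_rule_def)

lemma C0: "K F = Some u \<Longrightarrow> u \<in> R F"
  using R_colored sd_self ranK by auto

lemma R_sub: "E \<in> elections C \<Longrightarrow> R E \<subseteq> lin_orders C"
  using swrR by (simp add: swr_def)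

lemma D:
  assumes c: "K c = Some u" and t: "t \<in> R c" and tu: "t \<noteq> u"
  shows "infinite {c'. K c' = Some t \<and> R c' \<subseteq> R c}"
proof
  let ?S = "{c'. K c' = Some t \<and> R c' \<subseteq> R c}"
  assume fin: "finite ?S"
  have cE: "c \<in> elections C" using domK[OF c] .
  let ?L = "lin_orders C"
  define \<gamma> where "\<gamma> = (INF u'\<in>?L - R c. sd c u')"
  define \<delta> where "\<delta> = (INF c'\<in>?S. d c c')"
  have g: "0 < \<gamma>" unfolding \<gamma>_def
  proof (rule finite_INF_pos)
    show "finite (?L - R c)" using finite_lin[OF finC] by simp
    fix x assume "x \<in> ?L - R c"
    thus "0 < sd c x" using R_colored[OF c] by (auto simp: zero_less_iff_neq_zero)
  qed
  have dl: "0 < \<delta>" unfolding \<delta>_def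
  proof (rule finite_INF_pos[OF fin])
    fix x assume "x \<in> ?S"
    thus "0 < d c x" using posd[of c u x t] c tu by (auto simp: cons_class_def)
  qed
  have "min \<gamma> \<delta> \<le> sd c t" unfolding set_dist_def
  proof (rule INF_greatest)
    fix G assume G: "G \<in> cons_class K t"
    hence KG: "K G = Some t" by (simp add: cons_class_def)
    show "min \<gamma> \<delta> \<le> d c G"
    proof (cases "G \<in> ?S")
      case True
      hence "\<delta> \<le> d c G" unfolding \<delta>_def by (rule INF_lower)
      thus ?thesis by (simp add: min_le_iff_disj)
    next
      case False
      then obtain u' where u': "u' \<in> R G" "u' \<notin> R c" using KG by auto
      have u'L: "u' \<in> ?L" using u' R_sub[OF domK[OF KG]] by auto
      have "\<gamma> \<le> sd c u'" unfolding \<gamma>_def using u' u'L by (intro INF_lower) auto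
      also have "\<dots> \<le> d c G + sd G u'" using sd_tri[OF cE domK[OF KG]] .
      also have "sd G u' = 0" using R_colored[OF KG] u' by auto
      finally show ?thesis by (simp add: min_le_iff_disj)
    qed
  qed
  moreover have "sd c t = 0" using R_colored[OF c] t by auto
  ultimately show False using g dl by (simp add: min_def split: if_splits)
qed

lemma W:
  assumes a: "a \<in> elections C" and RL: "R a \<noteq> lin_orders C" and t: "t \<in> R a"
  shows "\<exists>c. K c = Some t \<and> R c \<subseteq> R a"
proof -
  let ?L = "lin_orders C"
  let ?M = "Min ((\<lambda>r. sd a r) ` ?L)"
  have Ra: "R a = {r \<in> ?L. sd a r = ?M}" using Req[OF a] by (simp add: rat_rule_def)
  have fL: "finite ?L" using finite_lin[OF finC] .
  have ne: "?L - R a \<noteq> {}" using RL R_sub[OF a] by auto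
  define \<gamma> where "\<gamma> = (INF u'\<in>?L - R a. sd a u')"
  have less: "?M < sd a u'" if "u' \<in> ?L - R a" for u'
  proof -
    have "?M \<le> sd a u'" using that fL by (intro Min_le) auto
    moreover have "sd a u' \<noteq> ?M" using that Ra by auto
    ultimately show ?thesis by simp
  qed
  have "\<gamma> \<in> (\<lambda>u'. sd a u') ` (?L - R a)"
    unfolding \<gamma>_def using fL ne by (metis Min_Inf Min_in finite_Diff finite_imageI image_is_empty)
  hence Mg: "?M < \<gamma>" using less by auto
  have "sd a t = ?M" using t Ra by auto
  hence "(INF G\<in>cons_class K t. d a G) < \<gamma>" using Mg by (simp add: set_dist_def)
  then obtain G where G: "G \<in> cons_class K t" "d a G < \<gamma>" by (auto simp: INF_less_iff)
  have KG: "K G = Some t" using G by (simp add: cons_class_def)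
  have "R G \<subseteq> R a"
  proof
    fix u' assume u': "u' \<in> R G"
    show "u' \<in> R a"
    proof (rule ccontr)
      assume "u' \<notin> R a"
      moreover have "u' \<in> ?L" using u' R_sub[OF domK[OF KG]] by auto
      ultimately have "\<gamma> \<le> sd a u'" unfolding \<gamma>_def by (intro INF_lower) auto
      also have "\<dots> \<le> d a G + sd G u'" using sd_tri[OF a domK[OF KG]] .
      also have "sd G u' = 0" using R_colored[OF KG] u' by auto
      finally show False using G(2) by simp
    qed
  qed
  thus ?thesis using KG by blast
qed

end



lemma orient_from_Y:
  fixes f :: "'a \<Rightarrow> 'a"
  assumes inv: "\<And>x. x \<in> P \<Longrightarrow> f x \<in> P \<and> f (f x) = x \<and> f x \<noteq> x"
    and Y1: "Y \<subseteq> P" and Y2: "\<And>x. x \<in> Y \<Longrightarrow> f x \<notin> Y"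
  defines "H \<equiv> Y \<union> {x\<in>P. x \<notin> Y \<and> f x \<notin> Y \<and> x = (SOME z. z \<in> {x, f x})}"
  shows "\<forall>x\<in>P. x \<in> H \<longleftrightarrow> f x \<notin> H"
proof
  fix x assume x: "x \<in> P"
  have fx: "f x \<in> P" "f (f x) = x" "f x \<noteq> x" using inv[OF x] by auto
  show "x \<in> H \<longleftrightarrow> f x \<notin> H"
  proof (cases "x \<in> Y")
    case True thus ?thesis using Y2 fx unfolding H_def by auto
  next
    case xY: False
    show ?thesis
    proof (cases "f x \<in> Y")
      case True thus ?thesis using xY fx unfolding H_def by auto
    next
      case False
      define s where "s = (SOME z. z \<in> {x, f x})"
      have s: "s \<in> {x, f x}" unfolding s_def by (rule someI[of _ x]) simp
      have "{f x, f (f x)} = {x, f x}" using fx by auto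
      hence s2: "(SOME z. z \<in> {f x, f (f x)}) = s" unfolding s_def by simp
      have "x \<in> H \<longleftrightarrow> x = s" using x xY False unfolding H_def s_def by auto
      moreover have "f x \<in> H \<longleftrightarrow> f x = s" using fx xY False s2 unfolding H_def by auto
      ultimately show ?thesis using s fx by auto
    qed
  qed
qed

lemma orient:
  fixes f :: "'a \<Rightarrow> 'a"
  assumes inv: "\<And>x. x \<in> P \<Longrightarrow> f x \<in> P \<and> f (f x) = x \<and> f x \<noteq> x"
    and cnt: "countable FF" and inf: "\<And>S. S \<in> FF \<Longrightarrow> infinite S \<and> S \<subseteq> P"
  shows "\<exists>H. (\<forall>x\<in>P. x \<in> H \<longleftrightarrow> f x \<notin> H) \<and> (\<forall>S\<in>FF. infinite (S \<inter> H))"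
proof (cases "FF = {}")
  case True
  show ?thesis using orient_from_Y[OF inv, of "{}"] True by blast
next
  case ne: False
  define F where "F k = from_nat_into FF k" for k
  have FF: "F k \<in> FF" for k unfolding F_def using ne by (rule from_nat_into)
  define xs where "xs = rec_nat [] (\<lambda>n l. l @ [SOME x. x \<in> F (fst (prod_decode n)) \<and> x \<notin> set l \<and> f x \<notin> set l])"
  define y where "y n = (SOME x. x \<in> F (fst (prod_decode n)) \<and> x \<notin> set (xs n) \<and> f x \<notin> set (xs n))" for n
  have xsS: "xs (Suc n) = xs n @ [y n]" for n unfolding xs_def y_def by simp
  have xs0: "xs 0 = []" unfolding xs_def by simp
  have setxs: "set (xs n) = y ` {..<n}" for n
    by (induction n) (auto simp: xsS xs0 lessThan_Suc)
  have yprop: "y n \<in> F (fst (prod_decode n)) \<and> y n \<notin> set (xs n) \<and> f (y n) \<notin> set (xs n)" for n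
  proof -
    let ?k = "fst (prod_decode n)"
    have "infinite (F ?k)" using inf FF by blast
    moreover have "finite (set (xs n) \<union> f ` set (xs n))" by simp
    ultimately obtain x where x: "x \<in> F ?k" "x \<notin> set (xs n) \<union> f ` set (xs n)"
      using infinite_imp_nonempty[of "F ?k - (set (xs n) \<union> f ` set (xs n))"] by auto
    have xP: "x \<in> P" using x inf FF by blast
    have "f x \<notin> set (xs n)"
    proof
      assume "f x \<in> set (xs n)"
      hence "f (f x) \<in> f ` set (xs n)" by auto
      thus False using inv[OF xP] x by auto
    qed
    hence "\<exists>x. x \<in> F ?k \<and> x \<notin> set (xs n) \<and> f x \<notin> set (xs n)" using x by auto
    thus ?thesis unfolding y_def by (rule someI_ex)
  qed
  have yP: "y n \<in> P" for n using yprop[of n] inf FF by blast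
  have ynot: "y n \<notin> y ` {..<n}" "f (y n) \<notin> y ` {..<n}" for n using yprop[of n] setxs by auto
  have yinj: "inj y"
  proof (rule injI)
    fix m n assume eq: "y m = y n"
    show "m = n"
    proof (rule ccontr)
      assume "m \<noteq> n"
      hence "m < n \<or> n < m" by arith
      thus False using ynot eq by (metis image_eqI lessThan_iff)
    qed
  qed
  define Y where "Y = range y"
  have Y1: "Y \<subseteq> P" using yP Y_def by auto
  have Y2: "f x \<notin> Y" if xY: "x \<in> Y" for x
  proof
    assume fY: "f x \<in> Y"
    obtain n where n: "x = y n" using xY Y_def by auto
    obtain m where m: "f x = y m" using fY Y_def by auto
    consider "m < n" | "n < m" | "m = n" by arith
    thus False
    proof cases
      case 1 thus ?thesis using ynot(2)[of n] n m by auto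
    next
      case 2
      have "f (y m) = y n" using m n inv[OF yP[of n]] by auto
      thus ?thesis using ynot(2)[of m] 2 by (metis image_eqI lessThan_iff)
    next
      case 3 thus ?thesis using inv[OF yP[of n]] n m by auto
    qed
  qed
  define H where "H \<equiv> Y \<union> {x\<in>P. x \<notin> Y \<and> f x \<notin> Y \<and> x = (SOME z. z \<in> {x, f x})}"
  have o: "\<forall>x\<in>P. x \<in> H \<longleftrightarrow> f x \<notin> H" unfolding H_def by (rule orient_from_Y[OF inv Y1 Y2])
  have "infinite (S \<inter> H)" if S: "S \<in> FF" for S
  proof -
    obtain k where k: "S = F k" using S cnt unfolding F_def by (metis from_nat_into_surj)
    have sub: "range (\<lambda>j. y (prod_encode (k, j))) \<subseteq> S \<inter> H"
    proof -
      have "y (prod_encode (k, j)) \<in> F k" for j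
        using yprop[of "prod_encode (k, j)"] by simp
      thus ?thesis using k unfolding H_def Y_def by auto
    qed
    have "inj (\<lambda>j. y (prod_encode (k, j)))"
      using yinj by (auto simp: inj_def dest: inj_prod_encode[THEN injD])
    hence "infinite (range (\<lambda>j. y (prod_encode (k, j))))" by (simp add: range_inj_infinite)
    thus ?thesis using sub infinite_super by blast
  qed
  thus ?thesis using o by blast
qed




lemma countable_elections:
  assumes "finite C" shows "countable (elections C)"
proof -
  define g where "g E = (fst (snd E), map (snd (snd E)) (sorted_list_of_set (fst (snd E))))"
    for E :: "'a election"
  have "g ` elections C \<subseteq> (Collect finite :: nat set set) \<times> lists (lin_orders C)"
    unfolding g_def elections_def by auto
  moreover have "countable ((Collect finite :: nat set set) \<times> lists (lin_orders C))"
  proof -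
    have a: "countable (Collect finite :: nat set set)" by (rule countable_Collect_finite)
    have b: "countable (lists (lin_orders C))" using finite_lin[OF assms]
      by (intro countable_lists countable_finite)
    show ?thesis by (rule countable_SIGMA[OF a]) (rule b)
  qed
  ultimately have "countable (g ` elections C)" by (rule countable_subset)
  moreover have "inj_on g (elections C)"
  proof (rule inj_onI)
    fix E E' assume E: "E \<in> elections C" and E': "E' \<in> elections C" and eq: "g E = g E'"
    obtain V \<pi> where Ed: "E = (C, V, \<pi>)" "finite V" "\<forall>v. v \<notin> V \<longrightarrow> \<pi> v = {}"
      using E unfolding elections_def by auto
    obtain V' \<pi>' where Ed': "E' = (C, V', \<pi>')" "\<forall>v. v \<notin> V' \<longrightarrow> \<pi>' v = {}"
      using E' unfolding elections_def by auto
    have VV: "V = V'" using eq Ed Ed' unfolding g_def by simp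
    have "map \<pi> (sorted_list_of_set V) = map \<pi>' (sorted_list_of_set V)"
      using eq Ed Ed' VV unfolding g_def by simp
    hence "\<forall>v\<in>V. \<pi> v = \<pi>' v" using Ed(2) by (simp add: map_eq_conv)
    hence "\<pi> = \<pi>'" using Ed Ed' VV by (metis ext)
    thus "E = E'" using Ed Ed' VV by simp
  qed
  ultimately show ?thesis by (rule countable_image_inj_on)
qed

lemma rev_fixed:
  assumes E: "E \<in> elections C" and fx: "rev_elec E = E" and r: "r \<in> lin_orders C"
  shows "rev_order r = r"
proof -
  obtain V \<pi> where Ed: "E = (C, V, \<pi>)" "V \<noteq> {}" "\<forall>v\<in>V. \<pi> v \<in> lin_orders C"
    using E unfolding elections_def by auto
  obtain v where v: "v \<in> V" using Ed by auto
  let ?p = "\<pi> v"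
  have p: "?p \<in> lin_orders C" using Ed v by auto
  have "rev_order \<circ> \<pi> = \<pi>" using fx Ed by (simp add: rev_elec_def)
  hence pp: "?p\<inverse> = ?p" by (metis comp_apply rev_order_def)
  have "?p = {}"
  proof (rule ccontr)
    assume "?p \<noteq> {}"
    then obtain a b where ab: "(a, b) \<in> ?p" by auto
    hence "(b, a) \<in> ?p" using pp by (metis converse_iff)
    hence "(a, a) \<in> ?p" using ab p unfolding lin_orders_def strict_linear_order_on_def trans_def by blast
    thus False using p unfolding lin_orders_def strict_linear_order_on_def irrefl_def by blast
  qed
  hence tot: "\<forall>a\<in>C. \<forall>b\<in>C. a = b" using p unfolding lin_orders_def strict_linear_order_on_def total_on_def by auto
  have "r = {}"
  proof (rule ccontr)
    assume "r \<noteq> {}"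
    then obtain a b where ab: "(a, b) \<in> r" by auto
    hence "a \<in> C" "b \<in> C" using r unfolding lin_orders_def by auto
    hence "a = b" using tot by auto
    thus False using ab r unfolding lin_orders_def strict_linear_order_on_def irrefl_def by blast
  qed
  thus ?thesis by (simp add: rev_order_def)
qed




definition incons :: "('c election \<Rightarrow> 'c rel option) \<Rightarrow> 'c election \<Rightarrow> bool" where
  "incons K x \<longleftrightarrow> x \<in> dom K \<and> rev_elec x \<in> dom K \<and> K (rev_elec x) \<noteq> Some (rev_order (the (K x)))"

definition Kp :: "('c election \<Rightarrow> 'c rel option) \<Rightarrow> 'c election set \<Rightarrow> 'c election \<Rightarrow> 'c rel option" where
  "Kp K H c = (if c \<in> dom K \<and> (\<not> incons K c \<or> c \<in> H) then K c
     else if rev_elec c \<in> dom K then Some (rev_order (the (K (rev_elec c)))) else None)"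

lemma incons_sym: "incons K x \<Longrightarrow> incons K (rev_elec x)"
  unfolding incons_def by (auto simp: rev_order_def)

lemma incons_sym_iff: "incons K (rev_elec x) \<longleftrightarrow> incons K x"
  by (metis incons_sym rev_elec_inv)

context
  fixes C :: "'c set" and R K d and H :: "'c election set"
  assumes finC: "finite C" and swrR: "swr C R" and symR: "swr_rev_sym C R"
    and dr: "dist_rat_wrt C R K d"
    and oriH: "\<forall>x. incons K x \<longrightarrow> (x \<in> H \<longleftrightarrow> rev_elec x \<notin> H)"
    and GH: "\<forall>b t u. K b = Some u \<longrightarrow> t \<in> R b \<longrightarrow> t \<noteq> u \<longrightarrow>
               infinite ({c'. K c' = Some t \<and> R c' \<subseteq> R b} - {x. incons K x \<and> x \<notin> H})"
begin

lemma Rrev: "E \<in> elections C \<Longrightarrow> R (rev_elec E) = rev_order ` R E"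
  using symR by (simp add: swr_rev_sym_def)

lemma Rrev_sub: "x \<in> elections C \<Longrightarrow> b \<in> elections C \<Longrightarrow> R x \<subseteq> R b \<Longrightarrow> R (rev_elec x) \<subseteq> R (rev_elec b)"
  using Rrev by auto

lemma Kp_sym: "cons_rev_sym (Kp K H)"
  unfolding cons_rev_sym_def
proof
  fix E assume "E \<in> dom (Kp K H)"
  then obtain u where u: "Kp K H E = Some u" by auto
  show "rev_elec E \<in> dom (Kp K H) \<and> Kp K H (rev_elec E) = Some (rev_order (the (Kp K H E)))"
  proof (cases "E \<in> dom K \<and> (\<not> incons K E \<or> E \<in> H)")
    case True
    hence KE: "K E = Some u" using u by (simp add: Kp_def)
    have "Kp K H (rev_elec E) = Some (rev_order u)"
    proof (cases "incons K E")
      case True2: True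
      have i2: "incons K (rev_elec E)" using True2 by (rule incons_sym)
      have "E \<in> H" using True True2 by blast
      hence "rev_elec E \<notin> H" using oriH True2 by blast
      note this i2
      thus ?thesis using KE by (auto simp: Kp_def)
    next
      case False2: False
      show ?thesis
      proof (cases "rev_elec E \<in> dom K")
        case True3: True
        hence "K (rev_elec E) = Some (rev_order u)" using False2 True KE unfolding incons_def by auto
        thus ?thesis using KE by (auto simp: Kp_def)
      next
        case False3: False
        thus ?thesis using KE by (auto simp: Kp_def)
      qed
    qed
    thus ?thesis using u by auto
  next
    case False
    hence r: "rev_elec E \<in> dom K" "u = rev_order (the (K (rev_elec E)))" using u
      by (auto simp: Kp_def split: if_splits)
    have "rev_elec E \<in> dom K \<and> (\<not> incons K (rev_elec E) \<or> rev_elec E \<in> H)"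
    proof (cases "E \<in> dom K")
      case True
      hence "incons K E" "E \<notin> H" using False by auto
      thus ?thesis using oriH r incons_sym by blast
    next
      case nd: False
      hence "\<not> incons K (rev_elec E)" unfolding incons_def by simp
      thus ?thesis using r by simp
    qed
    hence "Kp K H (rev_elec E) = K (rev_elec E)" by (simp add: Kp_def)
    thus ?thesis using r u by auto
  qed
qed

lemma dom_K_sub: "x \<in> dom K \<Longrightarrow> x \<in> elections C"
  using consK[OF finC swrR dr] unfolding consensus_def by auto

lemma Kp_cases:
  assumes "Kp K H c = Some u"
  obtains (A) "c \<in> dom K" "\<not> incons K c \<or> c \<in> H" "K c = Some u"
    | (B) "rev_elec c \<in> dom K" "\<not> (c \<in> dom K \<and> (\<not> incons K c \<or> c \<in> H))"
          "u = rev_order (the (K (rev_elec c)))"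
  using assms by (auto simp: Kp_def split: if_splits)

lemma Kp_El: "Kp K H c = Some u \<Longrightarrow> c \<in> elections C"
proof -
  assume "Kp K H c = Some u"
  thus ?thesis
  proof (cases rule: Kp_cases)
    case A thus ?thesis using dom_K_sub by blast
  next
    case B
    hence "rev_elec c \<in> elections C" using dom_K_sub by blast
    thus ?thesis by simp
  qed
qed

lemma Kp_cons: "consensus C (Kp K H)"
  unfolding consensus_def
proof
  show "dom (Kp K H) \<subseteq> elections C" using Kp_El by auto
  show "ran (Kp K H) \<subseteq> lin_orders C"
  proof
    fix u assume "u \<in> ran (Kp K H)"
    then obtain c where c: "Kp K H c = Some u" by (auto simp: ran_def)
    thus "u \<in> lin_orders C"
    proof (cases rule: Kp_cases)
      case A thus ?thesis using ranK[OF finC swrR dr] by blast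
    next
      case B
      then obtain s where s: "K (rev_elec c) = Some s" by auto
      have "s \<in> lin_orders C" using ranK[OF finC swrR dr s] .
      thus ?thesis using B s rev_order_lin by auto
    qed
  qed
qed

lemma C0': "Kp K H c = Some u \<Longrightarrow> u \<in> R c"
proof -
  assume c: "Kp K H c = Some u"
  have cE: "c \<in> elections C" using Kp_El[OF c] .
  from c show ?thesis
  proof (cases rule: Kp_cases)
    case A thus ?thesis using C0[OF finC swrR dr] by blast
  next
    case B
    then obtain s where s: "K (rev_elec c) = Some s" by auto
    have "s \<in> R (rev_elec c)" using C0[OF finC swrR dr s] .
    hence "rev_order s \<in> rev_order ` R (rev_elec c)" by auto
    also have "rev_order ` R (rev_elec c) = R c" using Rrev[OF cE] by (simp add: image_image)
    finally show ?thesis using B s by simp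
  qed
qed

lemma D':
  assumes c: "Kp K H c = Some u" and t: "t \<in> R c" and tu: "t \<noteq> u"
  shows "infinite {c'. Kp K H c' = Some t \<and> R c' \<subseteq> R c}"
proof -
  have cE: "c \<in> elections C" using Kp_El[OF c] .
  from c show ?thesis
  proof (cases rule: Kp_cases)
    case A
    have inf: "infinite ({c'. K c' = Some t \<and> R c' \<subseteq> R c} - {x. incons K x \<and> x \<notin> H})"
      using GH A t tu by blast
    have "{c'. K c' = Some t \<and> R c' \<subseteq> R c} - {x. incons K x \<and> x \<notin> H}
          \<subseteq> {c'. Kp K H c' = Some t \<and> R c' \<subseteq> R c}"
      by (auto simp: Kp_def)
    thus ?thesis using inf infinite_super by blast
  next
    case B
    let ?b = "rev_elec c"
    obtain s where s: "K ?b = Some s" using B by auto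
    have bE: "?b \<in> elections C" using dom_K_sub B(1) by blast
    have rt: "rev_order t \<in> R ?b" using Rrev[OF cE] t by auto
    have rts: "rev_order t \<noteq> s" using tu B s by auto
    have inf: "infinite ({c'. K c' = Some (rev_order t) \<and> R c' \<subseteq> R ?b} - {x. incons K x \<and> x \<notin> H})"
      using GH s rt rts by blast
    hence inf2: "infinite (rev_elec ` ({c'. K c' = Some (rev_order t) \<and> R c' \<subseteq> R ?b} - {x. incons K x \<and> x \<notin> H}))"
    proof -
      have "inj_on rev_elec ({c'. K c' = Some (rev_order t) \<and> R c' \<subseteq> R ?b} - {x. incons K x \<and> x \<notin> H})"
        by (rule inj_on_subset[OF rev_elec_inj subset_UNIV])
      thus ?thesis using inf by (simp add: finite_image_iff)
    qed
    have "rev_elec ` ({c'. K c' = Some (rev_order t) \<and> R c' \<subseteq> R ?b} - {x. incons K x \<and> x \<notin> H})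
          \<subseteq> {c'. Kp K H c' = Some t \<and> R c' \<subseteq> R c}"
    proof
      fix y assume "y \<in> rev_elec ` ({c'. K c' = Some (rev_order t) \<and> R c' \<subseteq> R ?b} - {x. incons K x \<and> x \<notin> H})"
      then obtain x where x: "y = rev_elec x" "K x = Some (rev_order t)" "R x \<subseteq> R ?b"
        "\<not> (incons K x \<and> x \<notin> H)" by auto
      have "x \<in> dom K" using x(2) by blast
      hence xE: "x \<in> elections C" by (rule dom_K_sub)
      have ry: "rev_elec y = x" using x by simp
      have "Kp K H y = Some t"
      proof (cases "y \<in> dom K \<and> (\<not> incons K y \<or> y \<in> H)")
        case True
        show ?thesis
        proof (cases "incons K y")
          case False
          then obtain v where v: "K y = Some v" using True by auto
          have "K x = Some (rev_order v)" using False True v ry x(2) unfolding incons_def by auto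
          hence "v = t" using x by (metis option.inject rev_order_inv)
          thus ?thesis using True v by (simp add: Kp_def)
        next
          case True2: True
          have ix: "incons K x" using incons_sym[OF True2] ry by simp
          have xH: "x \<in> H" using x(4) ix by blast
          have yH: "y \<in> H" using True True2 by blast
          have "y \<in> H \<longleftrightarrow> rev_elec y \<notin> H" using oriH True2 by blast
          hence False using xH yH ry by simp
          thus ?thesis ..
        qed
      next
        case False
        thus ?thesis using ry x by (auto simp: Kp_def)
      qed
      moreover have "R y \<subseteq> R c" using Rrev_sub[OF xE bE x(3)] x by simp
      ultimately show "y \<in> {c'. Kp K H c' = Some t \<and> R c' \<subseteq> R c}" by simp
    qed
    thus ?thesis using inf2 infinite_super by blast
  qed
qed

lemma Kp_dom: "c \<in> dom K \<Longrightarrow> c \<in> dom (Kp K H)"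
  unfolding Kp_def incons_def by (auto split: if_splits)

lemma W':
  assumes a: "a \<in> elections C" and RL: "R a \<noteq> lin_orders C" and t: "t \<in> R a"
  shows "\<exists>c. Kp K H c = Some t \<and> R c \<subseteq> R a"
proof -
  obtain c where c: "K c = Some t" "R c \<subseteq> R a" using W[OF finC swrR dr a RL t] by blast
  obtain u where u: "Kp K H c = Some u" using Kp_dom[of c] c by auto
  show ?thesis
  proof (cases "u = t")
    case True thus ?thesis using u c by blast
  next
    case False
    have "t \<in> R c" using C0[OF finC swrR dr c(1)] .
    hence "infinite {c'. Kp K H c' = Some t \<and> R c' \<subseteq> R c}" using D'[OF u] False by blast
    then obtain c' where "Kp K H c' = Some t" "R c' \<subseteq> R c" using infinite_imp_nonempty by blast
    thus ?thesis using c by blast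
  qed
qed

end



definition eps :: "'c set \<Rightarrow> 'c election \<Rightarrow> ennreal" where
  "eps C c = ennreal (1 / real (Suc (to_nat_on (elections C) c + to_nat_on (elections C) (rev_elec c))))"

definition Dq :: "'c set \<Rightarrow> ('c election \<Rightarrow> 'c rel set) \<Rightarrow> ('c election \<Rightarrow> 'c rel option)
    \<Rightarrow> 'c election \<Rightarrow> 'c election \<Rightarrow> ennreal" where
  "Dq C R K' a c = (if a = c then 0 else if c \<in> dom K' \<and> R c \<subseteq> R a then
      (if a \<in> dom K' then eps C c else if R a \<noteq> lin_orders C then 1 else top) else top)"

lemma eps_pos: "0 < eps C c"
  unfolding eps_def by simp

lemma eps_rev: "eps C (rev_elec c) = eps C c"
  unfolding eps_def by (simp add: add.commute)

lemma eps_inf: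
  assumes finC: "finite C" and inf: "infinite S" and sub: "S \<subseteq> elections C"
  shows "(INF c\<in>S. eps C c) = 0"
proof -
  have cnt: "countable (elections C)" using countable_elections[OF finC] .
  have "(INF c\<in>S. eps C c) \<le> 0"
  proof (rule ennreal_le_epsilon)
    fix e :: real assume e: "0 < e"
    obtain N :: nat where N: "1 / real (Suc N) < e"
      using e by (metis nat_approx_posE)
    have inj: "inj_on (to_nat_on (elections C)) S"
      using inj_on_to_nat_on[OF cnt] sub inj_on_subset by blast
    hence "infinite (to_nat_on (elections C) ` S)" using inf finite_imageD by blast
    have "\<exists>c\<in>S. N \<le> to_nat_on (elections C) c"
    proof (rule ccontr)
      assume "\<not> (\<exists>c\<in>S. N \<le> to_nat_on (elections C) c)"
      hence "to_nat_on (elections C) ` S \<subseteq> {..<N}" by auto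
      hence "finite (to_nat_on (elections C) ` S)" using finite_subset by blast
      thus False using \<open>infinite (to_nat_on (elections C) ` S)\<close> by simp
    qed
    then obtain c where c: "c \<in> S" "N \<le> to_nat_on (elections C) c" by blast
    define k where "k = Suc (to_nat_on (elections C) c + to_nat_on (elections C) (rev_elec c))"
    have le: "real (Suc N) \<le> real k" using c(2) unfolding k_def by simp
    have kpos: "0 < real k" unfolding k_def by simp
    have "1 / real k \<le> 1 / real (Suc N)" by (rule divide_left_mono[OF le]) (use kpos in \<open>simp_all add: mult_pos_pos\<close>)
    hence "1 / real k \<le> e" using N by linarith
    hence "eps C c \<le> ennreal e" unfolding eps_def k_def[symmetric] by (rule ennreal_leI)
    moreover have "(INF c\<in>S. eps C c) \<le> eps C c" using c by (intro INF_lower)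
    ultimately show "(INF c\<in>S. eps C c) \<le> 0 + ennreal e" by simp
  qed
  thus ?thesis by simp
qed

lemma rat_eq:
  fixes f :: "'r \<Rightarrow> ennreal"
  assumes "finite L" "A \<subseteq> L" "A \<noteq> {}" "\<And>r. r \<in> A \<Longrightarrow> f r = \<alpha>"
    "\<And>r. r \<in> L \<Longrightarrow> r \<notin> A \<Longrightarrow> \<alpha> < f r"
  shows "{r \<in> L. f r = Min (f ` L)} = A"
proof -
  obtain a where a: "a \<in> A" using assms(3) by auto
  have "Min (f ` L) = \<alpha>"
  proof (rule antisym)
    have aL: "a \<in> L" using a assms(2) by blast
    have "Min (f ` L) \<le> f a" using aL assms(1) by (intro Min_le) auto
    thus "Min (f ` L) \<le> \<alpha>" using assms(4)[OF a] by simp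
    have "\<forall>x\<in>f ` L. \<alpha> \<le> x"
    proof
      fix x assume "x \<in> f ` L"
      then obtain r where r: "r \<in> L" "x = f r" by auto
      show "\<alpha> \<le> x" using assms(4,5)[of r] r by (cases "r \<in> A") auto
    qed
    thus "\<alpha> \<le> Min (f ` L)" using assms a by (subst Min_ge_iff) auto
  qed
  show ?thesis
  proof
    show "{r \<in> L. f r = Min (f ` L)} \<subseteq> A"
    proof
      fix r assume r: "r \<in> {r \<in> L. f r = Min (f ` L)}"
      show "r \<in> A"
      proof (rule ccontr)
        assume "r \<notin> A"
        hence "\<alpha> < f r" using assms(5) r by blast
        thus False using r \<open>Min (f ` L) = \<alpha>\<close> by simp
      qed
    qed
    show "A \<subseteq> {r \<in> L. f r = Min (f ` L)}"
      using assms(2,4) \<open>Min (f ` L) = \<alpha>\<close> by auto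
  qed
qed




context
  fixes C :: "'c set" and R and K' :: "'c election \<Rightarrow> 'c rel option"
  assumes finC: "finite C" and swrR: "swr C R" and symR: "swr_rev_sym C R"
    and consK: "consensus C K'" and symK: "cons_rev_sym K'"
    and C0p: "\<And>c u. K' c = Some u \<Longrightarrow> u \<in> R c"
    and Dp: "\<And>c u t. K' c = Some u \<Longrightarrow> t \<in> R c \<Longrightarrow> t \<noteq> u \<Longrightarrow>
               infinite {c'. K' c' = Some t \<and> R c' \<subseteq> R c}"
    and Wp: "\<And>a t. a \<in> elections C \<Longrightarrow> K' a = None \<Longrightarrow> R a \<noteq> lin_orders C \<Longrightarrow> t \<in> R a \<Longrightarrow>
               \<exists>c. K' c = Some t \<and> R c \<subseteq> R a"
begin

lemma dom_sub: "c \<in> dom K' \<Longrightarrow> c \<in> elections C"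
  using consK unfolding consensus_def by auto

lemma dom_rev: "rev_elec c \<in> dom K' \<longleftrightarrow> c \<in> dom K'"
  using symK unfolding cons_rev_sym_def by (metis rev_elec_inv)

lemma Rrev9: "E \<in> elections C \<Longrightarrow> R (rev_elec E) = rev_order ` R E"
  using symR by (simp add: swr_rev_sym_def)

lemma Rsub_rev: "a \<in> elections C \<Longrightarrow> c \<in> elections C \<Longrightarrow>
    R (rev_elec c) \<subseteq> R (rev_elec a) \<longleftrightarrow> R c \<subseteq> R a"
  using Rrev9 by (simp add: inj_image_subset_iff[OF rev_order_inj])

lemma RL_rev: "a \<in> elections C \<Longrightarrow> R (rev_elec a) = lin_orders C \<longleftrightarrow> R a = lin_orders C"
proof -
  assume a: "a \<in> elections C"
  have "R (rev_elec a) = lin_orders C \<longleftrightarrow> rev_order ` R a = rev_order ` lin_orders C"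
    using Rrev9[OF a] by simp
  also have "\<dots> \<longleftrightarrow> R a = lin_orders C" by (rule inj_image_eq_iff[OF rev_order_inj])
  finally show ?thesis .
qed

lemma Dq_sym: "map_rev_sym C (Dq C R K')"
  unfolding map_rev_sym_def
proof (intro ballI)
  fix E E' assume E: "E \<in> elections C" and E': "E' \<in> elections C"
  have eq: "rev_elec E = rev_elec E' \<longleftrightarrow> E = E'" by (rule inj_eq[OF rev_elec_inj])
  show "Dq C R K' (rev_elec E) (rev_elec E') = Dq C R K' E E'"
    unfolding Dq_def using eq dom_rev Rsub_rev[OF E E'] RL_rev[OF E] by (simp add: eps_rev)
qed

lemma Dq_dist: "is_distance C (Dq C R K')"
  unfolding is_distance_def
proof (intro conjI ballI)
  fix E show "Dq C R K' E E = 0" by (simp add: Dq_def)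
next
  fix x y z
  show "Dq C R K' x z \<le> Dq C R K' x y + Dq C R K' y z"
  proof (cases "x = z \<or> x = y \<or> y = z")
    case True thus ?thesis by (auto simp: Dq_def)
  next
    case False
    show ?thesis
    proof (cases "Dq C R K' x y = top \<or> Dq C R K' y z = top")
      case True thus ?thesis by auto
    next
      case nt: False
      hence yz: "z \<in> dom K'" "R z \<subseteq> R y" using False by (auto simp: Dq_def split: if_splits)
      have xy: "y \<in> dom K'" "R y \<subseteq> R x" "x \<in> dom K' \<or> R x \<noteq> lin_orders C"
        using nt False by (auto simp: Dq_def split: if_splits)
      show ?thesis
      proof (cases "x \<in> dom K'")
        case True
        hence "Dq C R K' x z = eps C z" "Dq C R K' y z = eps C z"
          using False yz xy by (auto simp: Dq_def)
        thus ?thesis by (simp add: add_increasing)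
      next
        case nx: False
        hence "Dq C R K' x z = 1" "Dq C R K' x y = 1"
          using False yz xy by (auto simp: Dq_def)
        thus ?thesis by (simp add: add_increasing2)
      qed
    qed
  qed
qed

abbreviation "sq E r \<equiv> set_dist (Dq C R K') E (cons_class K' r)"

lemma INF_top_if: "(\<And>c. c \<in> A \<Longrightarrow> f c = (top::ennreal)) \<Longrightarrow> (INF c\<in>A. f c) = top"
  by (simp add: INF_eq_const top_unique INF_greatest)

lemma rat_colored:
  assumes E: "E \<in> elections C" and u: "K' E = Some u"
  shows "rat_rule C K' (Dq C R K') E = R E"
proof -
  have Ed: "E \<in> dom K'" using u by auto
  have RL: "R E \<subseteq> lin_orders C" "R E \<noteq> {}" using swrR E by (auto simp: swr_def)
  have inR: "sq E r = 0" if r: "r \<in> R E" for r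
  proof (cases "r = u")
    case True
    have "sq E r \<le> Dq C R K' E E" unfolding set_dist_def
      using True u by (intro INF_lower) (simp add: cons_class_def)
    thus ?thesis by (simp add: Dq_def)
  next
    case False
    let ?S = "{c'. K' c' = Some r \<and> R c' \<subseteq> R E}"
    have inf: "infinite ?S" using Dp[OF u r False] .
    have "sq E r \<le> (INF c\<in>?S. Dq C R K' E c)" unfolding set_dist_def
      by (rule INF_superset_mono) (auto simp: cons_class_def)
    also have "(INF c\<in>?S. Dq C R K' E c) = (INF c\<in>?S. eps C c)"
    proof (rule INF_cong)
      fix c assume c: "c \<in> ?S"
      hence "c \<noteq> E" using u False by auto
      thus "Dq C R K' E c = eps C c" using c Ed by (auto simp: Dq_def)
    qed simp
    also have "\<dots> = 0"
    proof (rule eps_inf[OF finC inf])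
      show "?S \<subseteq> elections C" using dom_sub by blast
    qed
    finally show ?thesis by simp
  qed
  have notR: "sq E r = top" if r: "r \<in> lin_orders C" "r \<notin> R E" for r
    unfolding set_dist_def
  proof (rule INF_top_if)
    fix c assume "c \<in> cons_class K' r"
    hence c: "K' c = Some r" by (simp add: cons_class_def)
    have "r \<in> R c" using C0p[OF c] .
    hence "\<not> R c \<subseteq> R E" using r by auto
    moreover have "c \<noteq> E" using c u C0p[OF u] r by auto
    ultimately show "Dq C R K' E c = top" by (simp add: Dq_def)
  qed
  show ?thesis unfolding rat_rule_def
    by (rule rat_eq[OF finite_lin[OF finC] RL, of _ 0]) (auto simp: inR notR)
qed

lemma rat_uncolored:
  assumes E: "E \<in> elections C" and u: "K' E = None"
  shows "rat_rule C K' (Dq C R K') E = R E"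
proof -
  have Ed: "E \<notin> dom K'" using u by auto
  have RL: "R E \<subseteq> lin_orders C" "R E \<noteq> {}" using swrR E by (auto simp: swr_def)
  show ?thesis
  proof (cases "R E = lin_orders C")
    case True
    have "sq E r = top" for r unfolding set_dist_def
    proof (rule INF_top_if)
      fix c assume "c \<in> cons_class K' r"
      hence "c \<noteq> E" using Ed by (auto simp: cons_class_def)
      thus "Dq C R K' E c = top" using Ed True by (simp add: Dq_def)
    qed
    thus ?thesis unfolding rat_rule_def
      by (intro rat_eq[OF finite_lin[OF finC] RL, of _ top]) (auto simp: True)
  next
    case False
    have inR: "sq E r = 1" if r: "r \<in> R E" for r
    proof (rule antisym)
      obtain c where c: "K' c = Some r" "R c \<subseteq> R E" using Wp[OF E u False r] by blast
      have "c \<noteq> E" using c Ed by auto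
      hence "Dq C R K' E c = 1" using c Ed False by (auto simp: Dq_def)
      moreover have "sq E r \<le> Dq C R K' E c" unfolding set_dist_def
        using c by (intro INF_lower) (simp add: cons_class_def)
      ultimately show "sq E r \<le> 1" by simp
      show "1 \<le> sq E r" unfolding set_dist_def
      proof (rule INF_greatest)
        fix c assume "c \<in> cons_class K' r"
        hence "c \<noteq> E" using Ed by (auto simp: cons_class_def)
        thus "1 \<le> Dq C R K' E c" using Ed False by (auto simp: Dq_def)
      qed
    qed
    have notR: "sq E r = top" if r: "r \<in> lin_orders C" "r \<notin> R E" for r
      unfolding set_dist_def
    proof (rule INF_top_if)
      fix c assume "c \<in> cons_class K' r"
      hence c: "K' c = Some r" by (simp add: cons_class_def)
      have "r \<in> R c" using C0p[OF c] .
      hence "\<not> R c \<subseteq> R E" using r by auto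
      moreover have "c \<noteq> E" using c Ed by auto
      ultimately show "Dq C R K' E c = top" by (simp add: Dq_def)
    qed
    show ?thesis unfolding rat_rule_def
      by (rule rat_eq[OF finite_lin[OF finC] RL, of _ 1]) (auto simp: inR notR)
  qed
qed

lemma final_wrt: "dist_rat_wrt C R K' (Dq C R K')"
  unfolding dist_rat_wrt_def
proof (intro conjI allI impI ballI)
  show "consensus C K'" by (rule consK)
  show "is_distance C (Dq C R K')" by (rule Dq_dist)
next
  fix r r' x y assume x: "x \<in> cons_class K' r" and y: "y \<in> cons_class K' r'" and rr: "r \<noteq> r'"
  hence "x \<noteq> y" "x \<in> dom K'" by (auto simp: cons_class_def)
  thus "0 < Dq C R K' x y" by (auto simp: Dq_def eps_pos)
next
  fix E assume E: "E \<in> elections C"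
  show "R E = rat_rule C K' (Dq C R K') E"
    using rat_colored[OF E] rat_uncolored[OF E] by (cases "K' E") auto
qed

end



lemma part_b:
  assumes finC: "finite C" and swrR: "swr C R" and symR: "swr_rev_sym C R" and drR: "dist_rat C R"
  shows "\<exists>K d. dist_rat_wrt C R K d \<and> cons_rev_sym K \<and> map_rev_sym C d"
proof -
  obtain K d where dr: "dist_rat_wrt C R K d" using drR by (auto simp: dist_rat_def)
  let ?P = "{x. incons K x}"
  let ?S = "\<lambda>b t. {c'. K c' = Some t \<and> R c' \<subseteq> R b}"
  define Dm where "Dm = {(b, t). b \<in> elections C \<and> t \<in> lin_orders C \<and> infinite (?S b t \<inter> ?P)}"
  define FF where "FF = (\<lambda>(b, t). ?S b t \<inter> ?P) ` Dm"
  have cntD: "countable Dm"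
  proof (rule countable_subset)
    show "Dm \<subseteq> elections C \<times> lin_orders C" unfolding Dm_def by auto
    show "countable (elections C \<times> lin_orders C)"
      by (rule countable_SIGMA[OF countable_elections[OF finC]])
         (rule countable_finite[OF finite_lin[OF finC]])
  qed
  have cntF: "countable FF" unfolding FF_def using cntD by simp
  have infF: "infinite S \<and> S \<subseteq> ?P" if "S \<in> FF" for S
    using that unfolding FF_def Dm_def by auto
  have inv: "rev_elec x \<in> ?P \<and> rev_elec (rev_elec x) = x \<and> rev_elec x \<noteq> x" if x: "x \<in> ?P" for x
  proof (intro conjI)
    show "rev_elec x \<in> ?P" using incons_sym[of K x] x by simp
    show "rev_elec (rev_elec x) = x" by simp
    show "rev_elec x \<noteq> x"
    proof
      assume fx: "rev_elec x = x"
      obtain u where u: "K x = Some u" using x unfolding incons_def by auto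
      have xE: "x \<in> elections C" using domK[OF finC swrR dr u] .
      have "u \<in> lin_orders C" using ranK[OF finC swrR dr u] .
      hence "rev_order u = u" using rev_fixed[OF xE fx] by simp
      thus False using x u fx unfolding incons_def by simp
    qed
  qed
  obtain H where oH: "\<forall>x\<in>?P. x \<in> H \<longleftrightarrow> rev_elec x \<notin> H" and iH: "\<forall>S\<in>FF. infinite (S \<inter> H)"
    using orient[of ?P rev_elec FF, OF inv cntF infF] by blast
  have oriH: "\<forall>x. incons K x \<longrightarrow> (x \<in> H \<longleftrightarrow> rev_elec x \<notin> H)" using oH by auto
  have GH: "\<forall>b t u. K b = Some u \<longrightarrow> t \<in> R b \<longrightarrow> t \<noteq> u \<longrightarrow>
               infinite (?S b t - {x. incons K x \<and> x \<notin> H})"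
  proof (intro allI impI)
    fix b t u assume b: "K b = Some u" and t: "t \<in> R b" and tu: "t \<noteq> u"
    have inf: "infinite (?S b t)" using D[OF finC swrR dr b t tu] .
    show "infinite (?S b t - {x. incons K x \<and> x \<notin> H})"
    proof (cases "infinite (?S b t \<inter> ?P)")
      case True
      have bE: "b \<in> elections C" using domK[OF finC swrR dr b] .
      have tL: "t \<in> lin_orders C" using t R_sub[OF finC swrR dr bE] by auto
      have "(b, t) \<in> Dm" unfolding Dm_def using bE tL True by simp
      hence "?S b t \<inter> ?P \<in> FF" unfolding FF_def by force
      hence "infinite (?S b t \<inter> ?P \<inter> H)" using iH by blast
      moreover have "?S b t \<inter> ?P \<inter> H \<subseteq> ?S b t - {x. incons K x \<and> x \<notin> H}" by auto
      ultimately show ?thesis using infinite_super by blast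
    next
      case False
      have eqS: "?S b t = (?S b t \<inter> ?P) \<union> (?S b t - ?P)" by blast
      have "infinite (?S b t - ?P)"
      proof
        assume "finite (?S b t - ?P)"
        hence "finite ((?S b t \<inter> ?P) \<union> (?S b t - ?P))" using False by simp
        thus False using inf eqS by simp
      qed
      moreover have "?S b t - ?P \<subseteq> ?S b t - {x. incons K x \<and> x \<notin> H}" by auto
      ultimately show ?thesis using infinite_super by blast
    qed
  qed
  let ?K' = "Kp K H"
  have consK': "consensus C ?K'" by (rule Kp_cons[OF finC swrR symR dr oriH GH])
  have symK': "cons_rev_sym ?K'" by (rule Kp_sym[OF finC swrR symR dr oriH GH])
  have C0p: "\<And>c u. ?K' c = Some u \<Longrightarrow> u \<in> R c" using C0'[OF finC swrR symR dr oriH GH] .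
  have Dp: "\<And>c u t. ?K' c = Some u \<Longrightarrow> t \<in> R c \<Longrightarrow> t \<noteq> u \<Longrightarrow>
               infinite {c'. ?K' c' = Some t \<and> R c' \<subseteq> R c}"
    using D'[OF finC swrR symR dr oriH GH] .
  have Wp: "\<And>a t. a \<in> elections C \<Longrightarrow> ?K' a = None \<Longrightarrow> R a \<noteq> lin_orders C \<Longrightarrow> t \<in> R a \<Longrightarrow>
               \<exists>c. ?K' c = Some t \<and> R c \<subseteq> R a"
    using W'[OF finC swrR symR dr oriH GH] by blast
  have "dist_rat_wrt C R ?K' (Dq C R ?K')"
    by (rule final_wrt[OF finC swrR symR consK' symK' C0p Dp Wp])
  moreover have "map_rev_sym C (Dq C R ?K')"
    by (rule Dq_sym[OF finC swrR symR consK' symK' C0p Dp Wp])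
  ultimately show ?thesis using symK' by blast
qed

theorem proposition4p15:
  fixes C :: "'c set" and m :: nat
  assumes "finite C" and "card C = m"
  shows "(\<forall>K d. consensus C K \<and> cons_rev_sym K \<and> map_rev_sym C d \<longrightarrow>
            (\<forall>E\<in>elections C. rat_rule C K d (rev_elec E) = rev_order ` rat_rule C K d E))
       \<and> (\<forall>R. swr C R \<and> swr_rev_sym C R \<and> dist_rat C R \<longrightarrow>
            (\<exists>K d. dist_rat_wrt C R K d \<and> cons_rev_sym K \<and> map_rev_sym C d))"
  using part_a part_b[OF assms(1)] by blast


end
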